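(* Let $k,t\ge 2$ be integers and let $F$ be a $(k,t,k)$-pattern with $W^k(F)=W^{k-1}(F)=\cdots=W^{k-g(k)}(F)=0$. Then $F$ is homogeneous.
   Context: For $k,t\ge 2$ and $s\in\mathbb{N}$, a $(k,t,s)$-pattern is a $k$-uniform hypergraph $F$ with a partition $V(F)=V_1\cup\cdots\cup V_t$ into parts of size $s$ such that whether $S\in\binom{V(F)}{k}$ is an edge depends only on $(|S\cap V_1|,\ldots,|S\cap V_t|)$; $F$ is homogeneous if it is empty or complete. For a finite set $V$ with $|V|\ge 2k\ge 2r$ and $f\colon\binom{V}{k}\to\mathbb{R}$, \[ W^r(f)=\left(\mathbb{E}_{(a_1,b_1,\ldots,a_r,b_r)}\Big(\mathbb{E}_{R}\,(-1)^{|R\cap\{b_1,\ldots,b_r\}|}f(R)\Big)^2\right)^{1/2}, \] where $(a_1,b_1,\ldots,a_r,b_r)$ is a uniformly random sequence of $2r$ distinct elements of $V$, and $R$ is a uniformly random $k$-subset of $V$ with $|R\cap\{a_i,b_i\}|=1$ for each $i\in[r]$; $W^r(F)=W^r(\mathbf{1}_F)$ with $\mathbf{1}_F$ the edge indicator. $g(k)$ is the smallest integer $g\ge 0$ such that for each integer $m\in[2,k]$, the system $\sum_{0\le i\le r}(-1)^i\binom{r}{i}\alpha_i=0$ for $r=m-g,\ldots,m$, with $\vec\alpha=(\alpha_0,\ldots,\alpha_m)\in\{0,1\}^{m+1}$, has only the solutions $(0,\ldots,0)$ and $(1,\ldots,1)$. *)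

theory Defs
  imports Complex_Main
begin

definition ksubsets :: "'a set \<Rightarrow> nat \<Rightarrow> 'a set set" where
  "ksubsets V k = {S. S \<subseteq> V \<and> card S = k}"

definition is_pattern :: "nat \<Rightarrow> nat \<Rightarrow> nat \<Rightarrow> 'a set \<Rightarrow> 'a set set \<Rightarrow> bool" where
  "is_pattern k t s V F \<longleftrightarrow>
     finite V \<and> F \<subseteq> ksubsets V k \<and>
     (\<exists>P :: nat \<Rightarrow> 'a set.
        (\<forall>i<t. P i \<subseteq> V \<and> card (P i) = s) \<and>
        (\<forall>i<t. \<forall>j<t. i \<noteq> j \<longrightarrow> P i \<inter> P j = {}) \<and>
        (\<Union>i<t. P i) = V \<and>
        (\<forall>S\<in>ksubsets V k. \<forall>T\<in>ksubsets V k.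
            (\<forall>i<t. card (S \<inter> P i) = card (T \<inter> P i)) \<longrightarrow> (S \<in> F \<longleftrightarrow> T \<in> F)))"

definition homogeneous :: "'a set \<Rightarrow> nat \<Rightarrow> 'a set set \<Rightarrow> bool" where
  "homogeneous V k F \<longleftrightarrow> F = {} \<or> F = ksubsets V k"

definition avg :: "'b set \<Rightarrow> ('b \<Rightarrow> real) \<Rightarrow> real" where
  "avg A h = (\<Sum>x\<in>A. h x) / real (card A)"

text \<open>Sequences (a_1,b_1,...,a_r,b_r) of 2r distinct elements of V, as lists;
  a_(i+1) = xs!(2i), b_(i+1) = xs!(2i+1).\<close>
definition seqs :: "'a set \<Rightarrow> nat \<Rightarrow> 'a list set" where
  "seqs V r = {xs. length xs = 2 * r \<and> distinct xs \<and> set xs \<subseteq> V}"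

definition Rsets :: "'a set \<Rightarrow> nat \<Rightarrow> nat \<Rightarrow> 'a list \<Rightarrow> 'a set set" where
  "Rsets V k r xs = {R \<in> ksubsets V k. \<forall>i<r. card (R \<inter> {xs ! (2*i), xs ! (2*i+1)}) = 1}"

definition bset :: "nat \<Rightarrow> 'a list \<Rightarrow> 'a set" where
  "bset r xs = {xs ! (2*i+1) | i. i < r}"

definition Wnorm :: "'a set \<Rightarrow> nat \<Rightarrow> nat \<Rightarrow> ('a set \<Rightarrow> real) \<Rightarrow> real" where
  "Wnorm V k r f =
     sqrt (avg (seqs V r)
       (\<lambda>xs. (avg (Rsets V k r xs)
                (\<lambda>R. (-1) ^ card (R \<inter> bset r xs) * f R))\<^sup>2))"

definition WF :: "'a set \<Rightarrow> nat \<Rightarrow> nat \<Rightarrow> 'a set set \<Rightarrow> real" where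
  "WF V k r F = Wnorm V k r (\<lambda>S. if S \<in> F then 1 else 0)"

definition g_ok :: "nat \<Rightarrow> nat \<Rightarrow> bool" where
  "g_ok k g \<longleftrightarrow> (\<forall>m\<in>{2..k}. \<forall>\<alpha> :: nat \<Rightarrow> bool.
      (\<forall>r\<in>{m - g..m}. (\<Sum>i\<le>r. (-1) ^ i * int (r choose i) * (if \<alpha> i then 1 else 0)) = 0)
      \<longrightarrow> (\<forall>i\<le>m. \<not> \<alpha> i) \<or> (\<forall>i\<le>m. \<alpha> i))"

definition gfun :: "nat \<Rightarrow> nat" where
  "gfun k = (LEAST g. g_ok k g)"

end

theory Submission
  imports Defs
begin


definition inc :: "(nat \<Rightarrow> nat) \<Rightarrow> nat \<Rightarrow> (nat \<Rightarrow> nat)" where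
  "inc v p = v(p := Suc (v p))"

fun Dl :: "(nat \<times> nat) list \<Rightarrow> ((nat \<Rightarrow> nat) \<Rightarrow> real) \<Rightarrow> (nat \<Rightarrow> nat) \<Rightarrow> real" where
  "Dl [] f v = f v"
| "Dl ((a,b)#P) f v = Dl P f (inc v a) - Dl P f (inc v b)"

definition vadd :: "(nat \<Rightarrow> nat) \<Rightarrow> (nat \<Rightarrow> nat) \<Rightarrow> (nat \<Rightarrow> nat)" where
  "vadd w y = (\<lambda>i. w i + y i)"

definition lev :: "nat \<Rightarrow> (nat \<Rightarrow> nat) \<Rightarrow> nat" where
  "lev t v = (\<Sum>i<t. v i)"

definition spt :: "nat \<Rightarrow> (nat \<Rightarrow> nat) \<Rightarrow> bool" where
  "spt t v \<longleftrightarrow> (\<forall>i\<ge>t. v i = 0)"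

definition out :: "nat \<Rightarrow> nat \<Rightarrow> nat \<Rightarrow> (nat \<Rightarrow> nat) \<Rightarrow> nat" where
  "out t p q v = (\<Sum>i\<in>{..<t} - {p,q}. v i)"

definition valid :: "nat \<Rightarrow> (nat \<times> nat) list \<Rightarrow> bool" where
  "valid t P \<longleftrightarrow> (\<forall>(a,b)\<in>set P. a < t \<and> b < t \<and> a \<noteq> b)"

lemma inc_alt: "inc v p = (\<lambda>i. v i + (if i = p then 1 else 0))"
  by (auto simp: inc_def)

lemma sum_inc: "finite A \<Longrightarrow> (\<Sum>i\<in>A. inc v u i) = (\<Sum>i\<in>A. v i) + (if u \<in> A then 1 else 0)"
  by (simp add: inc_alt sum.distrib)

lemma lev_inc: "u < t \<Longrightarrow> lev t (inc v u) = Suc (lev t v)"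
  unfolding lev_def by (simp add: sum_inc)

lemma out_inc: "out t p q (inc v u) = out t p q v + (if u < t \<and> u \<noteq> p \<and> u \<noteq> q then 1 else 0)"
  unfolding out_def by (simp add: sum_inc)

lemma spt_inc: "u < t \<Longrightarrow> spt t v \<Longrightarrow> spt t (inc v u)"
  by (auto simp: spt_def inc_def)

lemma inc_comm: "inc (inc v a) b = inc (inc v b) a"
  by (auto simp: inc_def fun_eq_iff)

lemma Dl_inc: "Dl P (\<lambda>v. f (inc v a)) w = Dl P f (inc w a)"
proof (induction P arbitrary: w)
  case (Cons ab P) then show ?case by (cases ab) (simp add: inc_comm)
qed simp

lemma Dl_diff: "Dl P (\<lambda>v. f v - g v) w = Dl P f w - Dl P g w"
proof (induction P arbitrary: w)
  case (Cons ab P) then show ?case by (cases ab) simp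
qed simp

lemma Dl_append: "Dl (A @ B) f w = Dl A (Dl B f) w"
proof (induction A arbitrary: w)
  case (Cons ab P) then show ?case by (cases ab) simp
qed simp

lemma lev_vadd: "lev t (vadd a b) = lev t a + lev t b"
  by (simp add: lev_def vadd_def sum.distrib)

lemma out_vadd: "out t p q (vadd a b) = out t p q a + out t p q b"
  by (simp add: out_def vadd_def sum.distrib)

lemma out_le_lev: "out t p q v \<le> lev t v"
  unfolding out_def lev_def by (rule sum_mono2) auto

lemma vadd_inc: "vadd (inc w a) y = vadd w (inc y a)"
  by (auto simp: vadd_def inc_def fun_eq_iff)

lemma Dl_zero:
  assumes "\<forall>(a,b)\<in>set P. a \<in> S \<and> b \<in> S" "S \<subseteq> {..<t}"
    "\<forall>y. (\<forall>i. i \<notin> S \<longrightarrow> y i = 0) \<longrightarrow> lev t y = length P \<longrightarrow> f (vadd w y) = 0"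
  shows "Dl P f w = 0"
  using assms
proof (induction P arbitrary: w)
  case Nil
  have "f (vadd w (\<lambda>_. 0)) = 0" using Nil(3) by (auto simp: lev_def)
  moreover have "vadd w (\<lambda>_. 0) = w" by (simp add: vadd_def)
  ultimately show ?case by simp
next
  case (Cons ab P)
  obtain a b where ab: "ab = (a,b)" by (cases ab)
  have aS: "a \<in> S" "b \<in> S" using Cons(2) ab by auto
  have h: "Dl P f (inc w c) = 0" if "c \<in> S" for c
  proof (rule Cons(1))
    show "\<forall>(a,b)\<in>set P. a \<in> S \<and> b \<in> S" using Cons(2) by auto
    show "S \<subseteq> {..<t}" by fact
    show "\<forall>y. (\<forall>i. i \<notin> S \<longrightarrow> y i = 0) \<longrightarrow> lev t y = length P \<longrightarrow> f (vadd (inc w c) y) = 0"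
    proof (intro allI impI)
      fix y assume y: "\<forall>i. i \<notin> S \<longrightarrow> y i = 0" "lev t y = length P"
      have "c < t" using that Cons(3) by auto
      then have "lev t (inc y c) = length (ab # P)" using y by (simp add: lev_inc)
      moreover have "\<forall>i. i \<notin> S \<longrightarrow> inc y c i = 0" using y that by (auto simp: inc_def)
      ultimately have "f (vadd w (inc y c)) = 0" using Cons(4) by blast
      then show "f (vadd (inc w c) y) = 0" by (simp add: vadd_inc)
    qed
  qed
  show ?case using h aS ab by simp
qed

lemma lev_split0: "t \<ge> 1 \<Longrightarrow> lev t x = x 0 + (\<Sum>i\<in>{1..<t}. x i)"
  unfolding lev_def by (simp add: lessThan_atLeast0 sum.atLeast_Suc_lessThan)

lemma const_level:
  assumes t1: "t \<ge> 1"
   and H: "\<And>y u v. spt t y \<Longrightarrow> Suc (lev t y) = n \<Longrightarrow> u < t \<Longrightarrow> v < t \<Longrightarrow> u \<noteq> v \<Longrightarrow> G (inc y u) = G (inc y v)"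
  shows "spt t x \<Longrightarrow> lev t x = n \<Longrightarrow> G x = G ((\<lambda>_. 0)(0 := n))"
proof (induction "\<Sum>i\<in>{1..<t}. x i" arbitrary: x rule: less_induct)
  case less
  show ?case
  proof (cases "\<forall>u\<in>{1..<t}. x u = 0")
    case True
    have "x = (\<lambda>_. 0)(0 := n)"
    proof
      fix i show "x i = ((\<lambda>_. 0)(0 := n)) i"
      proof (cases "i = 0")
        case True
        then show ?thesis using lev_split0[OF t1, of x] less(3) \<open>\<forall>u\<in>{1..<t}. x u = 0\<close> by simp
      next
        case False
        then show ?thesis using less(2) \<open>\<forall>u\<in>{1..<t}. x u = 0\<close> by (cases "i < t") (auto simp: spt_def)
      qed
    qed
    then show ?thesis by simp
  next
    case False
    then obtain u where u: "1 \<le> u" "u < t" "x u \<noteq> 0" by auto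
    define y where "y = x(u := x u - 1)"
    have xy: "x = inc y u" using u by (auto simp: y_def inc_def fun_eq_iff)
    have spy: "spt t y" using less(2) u by (auto simp: y_def spt_def)
    have ly: "Suc (lev t y) = n" using less(3) xy lev_inc[OF u(2)] by simp
    have "G x = G (inc y 0)" using H[OF spy ly u(2), of 0] t1 u xy by auto
    also have "\<dots> = G ((\<lambda>_. 0)(0 := n))"
    proof (rule less(1))
      have "(\<Sum>i\<in>{1..<t}. inc y 0 i) = (\<Sum>i\<in>{1..<t}. y i)" by (simp add: sum_inc)
      moreover have "(\<Sum>i\<in>{1..<t}. x i) = (\<Sum>i\<in>{1..<t}. y i) + 1" using xy u by (simp add: sum_inc)
      ultimately show "(\<Sum>i\<in>{1..<t}. inc y 0 i) < (\<Sum>i\<in>{1..<t}. x i)" by simp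
      show "spt t (inc y 0)" using spy t1 by (simp add: spt_inc)
      show "lev t (inc y 0) = n" using ly t1 by (simp add: lev_inc)
    qed
    finally show ?thesis .
  qed
qed

fun dif :: "nat \<Rightarrow> (nat \<Rightarrow> real) \<Rightarrow> nat \<Rightarrow> real" where
  "dif 0 h j = h j"
| "dif (Suc r) h j = dif r h j - dif r h (Suc j)"

lemma dif_sum: "dif r h j = (\<Sum>i\<le>r. (-1)^i * real (r choose i) * h (j + i))"
proof (induction r arbitrary: j)
  case 0 then show ?case by simp
next
  case (Suc r)
  have A: "(\<Sum>i\<le>Suc r. (-1)^i * real (Suc r choose i) * h (j + i))
      = h j + (\<Sum>i\<le>r. (-1)^Suc i * real (r choose i) * h (j + Suc i))
            + (\<Sum>i\<le>r. (-1)^Suc i * real (r choose Suc i) * h (j + Suc i))"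
    by (simp add: sum.atMost_Suc_shift sum.distrib algebra_simps sum_subtractf sum_negf del: sum.atMost_Suc)
  have B: "(\<Sum>i\<le>r. (-1)^i * real (r choose i) * h (j + i))
      = h j + (\<Sum>i\<le>r. (-1)^Suc i * real (r choose Suc i) * h (j + Suc i))"
  proof -
    have "(\<Sum>i\<le>Suc r. (-1)^i * real (r choose i) * h (j + i)) = (\<Sum>i\<le>r. (-1)^i * real (r choose i) * h (j + i))"
      by simp
    then show ?thesis by (simp add: sum.atMost_Suc_shift del: sum.atMost_Suc)
  qed
  show ?case using A B Suc[of j] Suc[of "Suc j"]
    by (simp add: sum_negf)
qed

lemma Dl_rep:
  assumes "p \<noteq> q"
  shows "Dl (replicate r (p,q)) f (z(p := a, q := b)) = dif r (\<lambda>i. f (z(p := a + b + r - i, q := i))) b"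
  using assms
proof (induction r arbitrary: a b)
  case 0
  have "a + b + 0 - b = a" by simp
  then show ?case by (simp only: Dl.simps dif.simps replicate_0)
next
  case (Suc r)
  have 1: "inc (z(p := a, q := b)) p = z(p := Suc a, q := b)" "inc (z(p := a, q := b)) q = z(p := a, q := Suc b)"
    using Suc.prems by (auto simp: inc_def fun_eq_iff)
  have 2: "Suc a + b + r = a + b + Suc r" "a + Suc b + r = a + b + Suc r" by simp_all
  have "Dl (replicate (Suc r) (p,q)) f (z(p := a, q := b))
      = Dl (replicate r (p,q)) f (z(p := Suc a, q := b)) - Dl (replicate r (p,q)) f (z(p := a, q := Suc b))"
    by (simp only: replicate_Suc Dl.simps 1)
  also have "\<dots> = dif r (\<lambda>i. f (z(p := a + b + Suc r - i, q := i))) b - dif r (\<lambda>i. f (z(p := a + b + Suc r - i, q := i))) (Suc b)"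
    by (simp only: Suc.IH[OF Suc.prems] 2)
  finally show ?case by (simp only: dif.simps)
qed



lemma g_ok_self: "g_ok k k"
  unfolding g_ok_def
proof (intro ballI allI impI)
  fix m and \<alpha> :: "nat \<Rightarrow> bool"
  assume m: "m \<in> {2..k}"
    and E: "\<forall>r\<in>{m - k..m}. (\<Sum>i\<le>r. (-1) ^ i * int (r choose i) * (if \<alpha> i then 1 else 0)) = 0"
  have "\<forall>i\<le>r. \<not> \<alpha> i" if "r \<le> m" for r
    using that
  proof (induction r)
    case 0
    have "0 \<in> {m - k..m}" using m by auto
    from bspec[OF E this]
    have "(\<Sum>i\<le>0. (-1) ^ i * int (0 choose i) * (if \<alpha> i then 1 else 0)) = 0" .
    then show ?case by (auto split: if_splits)
  next
    case (Suc r)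
    have "Suc r \<in> {m - k..m}" using m Suc.prems by auto
    from bspec[OF E this]
    have e: "(\<Sum>i\<le>Suc r. (-1) ^ i * int (Suc r choose i) * (if \<alpha> i then 1 else 0)) = 0" .
    have "(\<Sum>i\<le>r. (-1) ^ i * int (Suc r choose i) * (if \<alpha> i then 1 else 0)) = (0::int)"
      using Suc by (intro sum.neutral) auto
    then have "(-1) ^ Suc r * (if \<alpha> (Suc r) then 1 else 0) = (0::int)" using e by simp
    then have "\<not> \<alpha> (Suc r)" by (auto split: if_splits)
    then show ?case using Suc by (auto simp: le_Suc_eq)
  qed
  then show "(\<forall>i\<le>m. \<not> \<alpha> i) \<or> (\<forall>i\<le>m. \<alpha> i)" by blast
qed

lemma g_ok_gfun: "g_ok k (gfun k)"
  unfolding gfun_def by (rule LeastI[of _ k]) (rule g_ok_self)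

lemma lev_upd2: "p < t \<Longrightarrow> q < t \<Longrightarrow> p \<noteq> q \<Longrightarrow> lev t ((\<lambda>_. 0)(p := a, q := b)) = a + b"
proof -
  assume a: "p < t" "q < t" "p \<noteq> q"
  have "(\<lambda>_. 0)(p := a, q := b) = (\<lambda>i. (if i = p then a else 0) + (if i = q then b else 0))"
    using a by (auto simp: fun_eq_iff)
  then show ?thesis using a by (simp add: lev_def sum.distrib)
qed

lemma lev_split_pq: "p < t \<Longrightarrow> q < t \<Longrightarrow> p \<noteq> q \<Longrightarrow> lev t x = x p + x q + out t p q x"
proof -
  assume a: "p < t" "q < t" "p \<noteq> q"
  have "{p,q} \<subseteq> {..<t}" using a by auto
  then have "lev t x = sum x {p,q} + out t p q x"
    unfolding lev_def out_def using sum.subset_diff[of "{p,q}" "{..<t}" x] by simp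
  then show ?thesis using a by simp
qed

lemma Exp:
  assumes pq: "p < t" "q < t" "p \<noteq> q"
  shows "\<forall>z. z p = 0 \<longrightarrow> z q = 0 \<longrightarrow> spt t z \<longrightarrow> lev t z = n \<longrightarrow>
    (\<exists>U. valid t U \<and> length U = n \<and> (\<forall>w. spt t w \<longrightarrow>
        (\<forall>v. spt t v \<longrightarrow> lev t v = lev t w + n \<longrightarrow> out t p q v < out t p q w + n \<longrightarrow> G v = 0)
        \<longrightarrow> Dl U G w = G (vadd w z)))"
proof (induction n)
  case 0
  show ?case
  proof (intro allI impI)
    fix z assume z: "z p = 0" "z q = 0" "spt t z" "lev t z = 0"
    have "z = (\<lambda>_. 0)"
    proof
      fix i show "z i = 0"
        using z by (cases "i < t") (auto simp: spt_def lev_def)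
    qed
    then show "\<exists>U. valid t U \<and> length U = 0 \<and> (\<forall>w. spt t w \<longrightarrow>
        (\<forall>v. spt t v \<longrightarrow> lev t v = lev t w + 0 \<longrightarrow> out t p q v < out t p q w + 0 \<longrightarrow> G v = 0)
        \<longrightarrow> Dl U G w = G (vadd w z))"
      by (intro exI[of _ "[]"]) (auto simp: valid_def vadd_def)
  qed
next
  case (Suc n)
  show ?case
  proof (intro allI impI)
    fix z assume z: "z p = 0" "z q = 0" "spt t z" "lev t z = Suc n"
    obtain u where u: "u < t" "z u \<noteq> 0"
    proof (rule ccontr)
      assume "\<not> thesis"
      then have "\<forall>u<t. z u = 0" using that by blast
      then have "lev t z = 0" by (simp add: lev_def)
      then show False using z(4) by simp
    qed
    have upq: "u \<noteq> p" "u \<noteq> q" using u z by auto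
    define z' where "z' = z(u := z u - 1)"
    have zz: "z = inc z' u" using u by (auto simp: z'_def inc_def fun_eq_iff)
    have z'a: "z' p = 0" "z' q = 0" "spt t z'"
      using z upq u by (auto simp: z'_def spt_def)
    have "lev t z = Suc (lev t z')" unfolding zz by (rule lev_inc[OF u(1)])
    then have z': "z' p = 0" "z' q = 0" "spt t z'" "lev t z' = n" using z'a z(4) by auto
    obtain U where U: "valid t U" "length U = n" and
      UU0: "\<forall>w. spt t w \<longrightarrow>
        (\<forall>v. spt t v \<longrightarrow> lev t v = lev t w + n \<longrightarrow> out t p q v < out t p q w + n \<longrightarrow> G v = 0)
        \<longrightarrow> Dl U G w = G (vadd w z')"
      using Suc.IH[rule_format, OF z'] by blast
    show "\<exists>U. valid t U \<and> length U = Suc n \<and> (\<forall>w. spt t w \<longrightarrow>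
        (\<forall>v. spt t v \<longrightarrow> lev t v = lev t w + Suc n \<longrightarrow> out t p q v < out t p q w + Suc n \<longrightarrow> G v = 0)
        \<longrightarrow> Dl U G w = G (vadd w z))"
    proof (intro exI[of _ "(u,p) # U"] conjI allI impI)
      show "valid t ((u,p) # U)" using U u pq upq by (auto simp: valid_def)
      show "length ((u,p) # U) = Suc n" using U by simp
      fix w assume w: "spt t w"
        and G0: "\<forall>v. spt t v \<longrightarrow> lev t v = lev t w + Suc n \<longrightarrow> out t p q v < out t p q w + Suc n \<longrightarrow> G v = 0"
      have 1: "Dl U G (inc w u) = G (vadd w z)"
      proof -
        have h1: "spt t (inc w u)" using w u by (simp add: spt_inc)
        have h2: "\<forall>v. spt t v \<longrightarrow> lev t v = lev t (inc w u) + n \<longrightarrow> out t p q v < out t p q (inc w u) + n \<longrightarrow> G v = 0"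
            using G0 u upq by (simp add: lev_inc out_inc)
        have "Dl U G (inc w u) = G (vadd (inc w u) z')"
          using UU0 h1 h2 by blast
        also have "vadd (inc w u) z' = vadd w z" using zz by (simp add: vadd_inc)
        finally show ?thesis .
      qed
      have 2: "Dl U G (inc w p) = 0"
      proof (rule Dl_zero[where S="{..<t}" and t=t])
        show "\<forall>(a, b)\<in>set U. a \<in> {..<t} \<and> b \<in> {..<t}" using U by (auto simp: valid_def)
        show "{..<t} \<subseteq> {..<t}" by simp
        show "\<forall>y. (\<forall>i. i \<notin> {..<t} \<longrightarrow> y i = 0) \<longrightarrow> lev t y = length U \<longrightarrow> G (vadd (inc w p) y) = 0"
        proof (intro allI impI)
          fix y assume y: "\<forall>i. i \<notin> {..<t} \<longrightarrow> y i = 0" "lev t y = length U"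
          show "G (vadd (inc w p) y) = 0"
          proof (rule G0[rule_format])
            show "spt t (vadd (inc w p) y)" using w y pq by (auto simp: spt_def vadd_def inc_def)
            show "lev t (vadd (inc w p) y) = lev t w + Suc n"
              using y U pq by (simp add: lev_vadd lev_inc)
            have "out t p q y \<le> n" using out_le_lev[of t p q y] y U by simp
            then show "out t p q (vadd (inc w p) y) < out t p q w + Suc n"
              by (simp add: out_vadd out_inc)
          qed
        qed
      qed
      show "Dl ((u, p) # U) G w = G (vadd w z)" using 1 2 by simp
    qed
  qed
qed


locale comb =
  fixes t k g :: nat and \<phi> :: "(nat \<Rightarrow> nat) \<Rightarrow> real"
  assumes t2: "t \<ge> 2" and gok: "g_ok k g"
  and phi01: "\<And>v. \<phi> v = 0 \<or> \<phi> v = 1"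
  and H: "\<And>r P v. k - g \<le> r \<Longrightarrow> r \<le> k \<Longrightarrow> valid t P \<Longrightarrow> length P = r \<Longrightarrow> spt t v \<Longrightarrow> lev t v = k - r \<Longrightarrow> Dl P \<phi> v = 0"
begin

lemma stepA:
  assumes pq: "p < t" "q < t" "p \<noteq> q"
  shows "spt t x \<Longrightarrow> Suc (lev t x) = k \<Longrightarrow> \<phi> (inc x p) = \<phi> (inc x q)"
proof (induction "out t p q x" arbitrary: x rule: less_induct)
  case less
  define d where "d = out t p q x"
  define z where "z = x(p := 0, q := 0)"
  define m where "m = x p + x q + 1"
  have zp: "z p = 0" "z q = 0" using pq by (auto simp: z_def)
  have spz: "spt t z" using less(2) by (auto simp: z_def spt_def)
  have outz: "out t p q z = d" unfolding d_def out_def z_def by (rule sum.cong) auto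
  have levz: "lev t z = d" using lev_split_pq[OF pq, of z] zp outz by simp
  have mdk: "m + d = k" using lev_split_pq[OF pq, of x] less(3) by (simp add: m_def d_def)
  have Gvan: "Dl (replicate r (p,q)) \<phi> v = 0"
    if r: "1 \<le> r" "r \<le> m" and v: "spt t v" "lev t v = k - r" "out t p q v < d" for r v
  proof -
    obtain r' where r': "r = Suc r'" using r by (cases r) auto
    have "replicate r (p,q) = replicate r' (p,q) @ [(p,q)]"
      by (simp add: r' replicate_append_same)
    then have "Dl (replicate r (p,q)) \<phi> v = Dl (replicate r' (p,q)) (Dl [(p,q)] \<phi>) v" by (simp add: Dl_append)
    also have "\<dots> = 0"
    proof (rule Dl_zero[where S="{p,q}" and t=t])
      show "\<forall>(a, b)\<in>set (replicate r' (p,q)). a \<in> {p,q} \<and> b \<in> {p,q}" by auto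
      show "{p,q} \<subseteq> {..<t}" using pq by auto
      show "\<forall>y. (\<forall>i. i \<notin> {p,q} \<longrightarrow> y i = 0) \<longrightarrow> lev t y = length (replicate r' (p,q)) \<longrightarrow> Dl [(p,q)] \<phi> (vadd v y) = 0"
      proof (intro allI impI)
        fix y assume y: "\<forall>i. i \<notin> {p,q} \<longrightarrow> y i = 0" "lev t y = length (replicate r' (p,q))"
        have oy: "out t p q y = 0" unfolding out_def using y(1) by (intro sum.neutral) auto
        have "\<phi> (inc (vadd v y) p) = \<phi> (inc (vadd v y) q)"
        proof (rule less(1))
          show "out t p q (vadd v y) < out t p q x" using v oy by (simp add: out_vadd d_def)
          show "spt t (vadd v y)" using v(1) y(1) pq by (auto simp: spt_def vadd_def)
          have "r \<le> k" using r mdk by simp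
          then show "Suc (lev t (vadd v y)) = k" using v y r' by (simp add: lev_vadd)
        qed
        then show "Dl [(p,q)] \<phi> (vadd v y) = 0" by simp
      qed
    qed
    finally show ?thesis .
  qed
  have Kill: "Dl (replicate r (p,q)) \<phi> (z(p := a, q := b)) = 0"
    if r: "1 \<le> r" "r \<le> m" "k - g \<le> r + d" and ab: "a + b = m - r" for r a b
  proof -
    define G where "G = Dl (replicate r (p,q)) \<phi>"
    define w0 :: "nat \<Rightarrow> nat" where "w0 = (\<lambda>_. 0)(p := a, q := b)"
    obtain U where U: "valid t U" "length U = d" and
      UU: "\<forall>w. spt t w \<longrightarrow>
        (\<forall>v. spt t v \<longrightarrow> lev t v = lev t w + d \<longrightarrow> out t p q v < out t p q w + d \<longrightarrow> G v = 0)
        \<longrightarrow> Dl U G w = G (vadd w z)"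
      using Exp[OF pq, of d G, rule_format, OF zp spz levz] by blast
    have spw: "spt t w0" using pq by (auto simp: spt_def w0_def)
    have lw: "lev t w0 = a + b" using lev_upd2[OF pq] by (simp add: w0_def)
    have ow: "out t p q w0 = 0" unfolding out_def w0_def by (intro sum.neutral) auto
    have abd: "a + b + d = k - r" using ab mdk r by simp
    have "\<forall>v. spt t v \<longrightarrow> lev t v = lev t w0 + d \<longrightarrow> out t p q v < out t p q w0 + d \<longrightarrow> G v = 0"
      using Gvan[OF r(1,2)] abd lw ow unfolding G_def by auto
    then have 1: "Dl U G w0 = G (vadd w0 z)" using UU spw by blast
    have 2: "vadd w0 z = z(p := a, q := b)" using zp by (auto simp: vadd_def w0_def fun_eq_iff)
    have "Dl U G w0 = Dl (U @ replicate r (p,q)) \<phi> w0" by (simp add: Dl_append G_def)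
    also have "\<dots> = 0"
    proof (rule H[of "d + r"])
      show "k - g \<le> d + r" using r by simp
      show "d + r \<le> k" using r mdk by simp
      show "valid t (U @ replicate r (p, q))" using U pq by (auto simp: valid_def)
      show "length (U @ replicate r (p, q)) = d + r" using U by simp
      show "spt t w0" by fact
      show "lev t w0 = k - (d + r)" using lw abd by simp
    qed
    finally show ?thesis using 1 2 by (simp add: G_def)
  qed
  show ?case
  proof (cases "m \<le> g + 1")
    case True
    have "Dl (replicate 1 (p,q)) \<phi> (z(p := x p, q := x q)) = 0"
      by (rule Kill) (use True mdk in \<open>auto simp: m_def\<close>)
    moreover have "z(p := x p, q := x q) = x" using pq by (auto simp: z_def fun_eq_iff)
    ultimately show ?thesis by simp
  next
    case False
    define \<alpha> where "\<alpha> i = (\<phi> (z(p := m - i, q := i)) = 1)" for i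
    have E: "\<forall>r\<in>{m - g..m}. (\<Sum>i\<le>r. (-1) ^ i * int (r choose i) * (if \<alpha> i then 1 else 0)) = 0"
    proof
      fix r assume r: "r \<in> {m - g..m}"
      have "Dl (replicate r (p,q)) \<phi> (z(p := m - r, q := 0)) = 0"
        by (rule Kill) (use r False mdk in auto)
      moreover have "Dl (replicate r (p,q)) \<phi> (z(p := m - r, q := 0)) = dif r (\<lambda>i. \<phi> (z(p := m - r + 0 + r - i, q := i))) 0"
        by (rule Dl_rep[OF pq(3)])
      ultimately have X: "dif r (\<lambda>i. \<phi> (z(p := m - r + 0 + r - i, q := i))) 0 = 0" by simp
      have eq: "m - r + 0 + r - i = m - i" for i using r by auto
      from X have "dif r (\<lambda>i. \<phi> (z(p := m - i, q := i))) 0 = 0" by (simp only: eq)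
      then have S1: "(\<Sum>i\<le>r. (-1)^i * real (r choose i) * \<phi> (z(p := m - i, q := i))) = 0"
        by (simp add: dif_sum)
      have P1: "\<phi> (z(p := m - i, q := i)) = (if \<alpha> i then 1 else 0)" for i
        using phi01[of "z(p := m - i, q := i)"] by (auto simp: \<alpha>_def)
      have "real_of_int (\<Sum>i\<le>r. (-1) ^ i * int (r choose i) * (if \<alpha> i then 1 else 0)) = 0"
      proof -
        have "\<And>i. real_of_int (if \<alpha> i then 1 else 0) = (if \<alpha> i then 1 else 0)" by simp
        then show ?thesis using S1 P1 by simp
      qed
      then show "(\<Sum>i\<le>r. (-1) ^ i * int (r choose i) * (if \<alpha> i then 1 else 0)) = 0"
        by (simp only: of_int_eq_0_iff)
    qed
    have m2: "m \<in> {2..k}" using False mdk by auto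
    have "\<forall>m\<in>{2..k}. \<forall>\<alpha> :: nat \<Rightarrow> bool.
      (\<forall>r\<in>{m - g..m}. (\<Sum>i\<le>r. (-1) ^ i * int (r choose i) * (if \<alpha> i then 1 else 0)) = 0)
      \<longrightarrow> (\<forall>i\<le>m. \<not> \<alpha> i) \<or> (\<forall>i\<le>m. \<alpha> i)" using gok by (simp only: g_ok_def)
    from spec[OF bspec[OF this m2], of \<alpha>] E
    have D: "(\<forall>i\<le>m. \<not> \<alpha> i) \<or> (\<forall>i\<le>m. \<alpha> i)" by (rule mp)
    have e1: "inc x p = z(p := m - x q, q := x q)" using pq by (auto simp: z_def m_def inc_def fun_eq_iff)
    have e2: "inc x q = z(p := m - Suc (x q), q := Suc (x q))" using pq by (auto simp: z_def m_def inc_def fun_eq_iff)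
    have "x q \<le> m" "Suc (x q) \<le> m" by (auto simp: m_def)
    then have "\<alpha> (x q) = \<alpha> (Suc (x q))" using D by blast
    then have "(\<phi> (inc x p) = 1) = (\<phi> (inc x q) = 1)" unfolding e1 e2 \<alpha>_def .
    then show ?thesis using phi01[of "inc x p"] phi01[of "inc x q"] by auto
  qed
qed

lemma phi_const: "spt t x \<Longrightarrow> lev t x = k \<Longrightarrow> \<phi> x = \<phi> ((\<lambda>_. 0)(0 := k))"
proof (rule const_level[where t=t])
  show "1 \<le> t" using t2 by simp
  fix y u v assume "spt t y" "Suc (lev t y) = k" "u < t" "v < t" "u \<noteq> v"
  then show "\<phi> (inc y u) = \<phi> (inc y v)" using stepA by blast
qed

end



definition pflat :: "('a \<times> 'a) list \<Rightarrow> 'a list" where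
  "pflat prs = concat (map (\<lambda>(a,b). [a,b]) prs)"

lemma pflat_simps[simp]: "pflat [] = []" "pflat ((a,b)#prs) = a # b # pflat prs"
  by (simp_all add: pflat_def)

lemma length_pflat: "length (pflat prs) = 2 * length prs"
  by (induction prs) (auto simp: pflat_def)

lemma pflat_nth: "i < length prs \<Longrightarrow> pflat prs ! (2*i) = fst (prs!i) \<and> pflat prs ! (2*i+1) = snd (prs!i)"
proof (induction prs arbitrary: i)
  case Nil then show ?case by simp
next
  case (Cons ab prs)
  obtain a b where ab: "ab = (a,b)" by (cases ab)
  show ?case
  proof (cases i)
    case 0 then show ?thesis using ab by simp
  next
    case (Suc j)
    then have "j < length prs" using Cons.prems by simp
    then show ?thesis using Cons.IH[of j] ab Suc by simp
  qed
qed

lemma pflat_mem: "(x, y) \<in> set prs \<Longrightarrow> x \<in> set (pflat prs) \<and> y \<in> set (pflat prs)"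
  by (induction prs) (auto simp: pflat_def)

definition Rs :: "'a set \<Rightarrow> ('a \<times> 'a) list \<Rightarrow> nat \<Rightarrow> 'a set set" where
  "Rs U prs n = {R. R \<subseteq> U \<union> set (pflat prs) \<and> card R = n + length prs \<and>
      (\<forall>(a,b)\<in>set prs. card (R \<inter> {a,b}) = 1)}"

lemma Rs_finite: "finite U \<Longrightarrow> finite (Rs U prs n)"
proof -
  assume "finite U"
  then have "finite (Pow (U \<union> set (pflat prs)))" by simp
  moreover have "Rs U prs n \<subseteq> Pow (U \<union> set (pflat prs))" by (auto simp: Rs_def)
  ultimately show ?thesis by (rule finite_subset[rotated])
qed

lemma Rs_Cons:
  assumes ab: "a \<notin> U \<union> set (pflat prs)" "b \<notin> U \<union> set (pflat prs)" "a \<noteq> b" and fU: "finite U"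
  shows "Rs U ((a,b)#prs) n = insert a ` Rs U prs n \<union> insert b ` Rs U prs n"
proof (intro equalityI subsetI)
  have nab: "a \<notin> {a',b'} \<and> b \<notin> {a',b'}" if "(a',b') \<in> set prs" for a' b'
    using ab pflat_mem[OF that] by auto
  fix R assume R: "R \<in> Rs U ((a,b)#prs) n"
  have R1: "R \<subseteq> U \<union> set (pflat prs) \<union> {a,b}" and R2: "card R = Suc (n + length prs)"
    and R3: "card (R \<inter> {a,b}) = 1"
    and R4: "\<And>a' b'. (a',b') \<in> set prs \<Longrightarrow> card (R \<inter> {a',b'}) = 1" using R by (auto simp: Rs_def)
  have fR: "finite R" by (rule finite_subset[OF R1]) (use fU in simp)
  have cs: "(a \<in> R \<and> b \<notin> R) \<or> (b \<in> R \<and> a \<notin> R)"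
  proof -
    have "\<not> (a \<in> R \<and> b \<in> R)"
    proof
      assume "a \<in> R \<and> b \<in> R" then have "R \<inter> {a,b} = {a,b}" by auto
      then show False using R3 ab(3) by simp
    qed
    moreover have "\<not> (a \<notin> R \<and> b \<notin> R)"
    proof
      assume "a \<notin> R \<and> b \<notin> R" then have "R \<inter> {a,b} = {}" by auto
      then show False using R3 by simp
    qed
    ultimately show ?thesis by blast
  qed
  have rem: "R - {c} \<in> Rs U prs n" if c: "c \<in> R" "c = a \<or> c = b" "({a,b} - {c}) \<inter> R = {}" for c
    unfolding Rs_def
  proof (intro CollectI conjI)
    show "R - {c} \<subseteq> U \<union> set (pflat prs)" using R1 c by auto
    show "card (R - {c}) = n + length prs" using R2 c fR by simp
    show "\<forall>(a',b')\<in>set prs. card ((R - {c}) \<inter> {a',b'}) = 1"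
    proof (rule ballI)
      fix x assume x: "x \<in> set prs"
      obtain a' b' where xx: "x = (a',b')" by (cases x)
      have "(R - {c}) \<inter> {a',b'} = R \<inter> {a',b'}" using nab[of a' b'] x xx c by auto
      then show "case x of (a',b') \<Rightarrow> card ((R - {c}) \<inter> {a',b'}) = 1" using R4[of a' b'] x xx by simp
    qed
  qed
  show "R \<in> insert a ` Rs U prs n \<union> insert b ` Rs U prs n"
  proof (cases "a \<in> R")
    case True
    with cs have "b \<notin> R" by blast
    then have "R - {a} \<in> Rs U prs n" using rem[of a] True by auto
    moreover have "R = insert a (R - {a})" using True by auto
    ultimately show ?thesis by blast
  next
    case False
    with cs have "b \<in> R" by blast
    then have "R - {b} \<in> Rs U prs n" using rem[of b] False by auto
    moreover have "R = insert b (R - {b})" using \<open>b \<in> R\<close> by auto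
    ultimately show ?thesis by blast
  qed
next
  have nab: "a \<notin> {a',b'} \<and> b \<notin> {a',b'}" if "(a',b') \<in> set prs" for a' b'
    using ab pflat_mem[OF that] by auto
  fix R assume "R \<in> insert a ` Rs U prs n \<union> insert b ` Rs U prs n"
  then obtain R' c where c: "c = a \<or> c = b" and R': "R' \<in> Rs U prs n" and RR: "R = insert c R'" by auto
  have R'1: "R' \<subseteq> U \<union> set (pflat prs)" and R'2: "card R' = n + length prs"
    and R'3: "\<And>a' b'. (a',b') \<in> set prs \<Longrightarrow> card (R' \<inter> {a',b'}) = 1" using R' by (auto simp: Rs_def)
  have fR': "finite R'" by (rule finite_subset[OF R'1]) (use fU in simp)
  have aR': "a \<notin> R'" "b \<notin> R'" using R'1 ab by auto
  show "R \<in> Rs U ((a,b)#prs) n" unfolding Rs_def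
  proof (intro CollectI conjI)
    show "R \<subseteq> U \<union> set (pflat ((a,b)#prs))" using R'1 c RR by auto
    have "c \<notin> R'" using aR' c by auto
    then show "card R = n + length ((a,b)#prs)" using R'2 RR fR' by simp
    show "\<forall>(a',b')\<in>set ((a,b)#prs). card (R \<inter> {a',b'}) = 1"
    proof (rule ballI)
      fix x assume x: "x \<in> set ((a,b)#prs)"
      obtain a' b' where xx: "x = (a',b')" by (cases x)
      have "card (R \<inter> {a',b'}) = 1"
      proof (cases "x = (a,b)")
        case True
        then have "R \<inter> {a',b'} = {c}" using xx RR c aR' ab(3) by auto
        then show ?thesis by simp
      next
        case False
        then have x2: "(a',b') \<in> set prs" using x xx by auto
        then have "R \<inter> {a',b'} = R' \<inter> {a',b'}" using RR c nab[OF x2] by auto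
        then show ?thesis using R'3[OF x2] by simp
      qed
      then show "case x of (a',b') \<Rightarrow> card (R \<inter> {a',b'}) = 1" using xx by simp
    qed
  qed
qed

locale pat =
  fixes t k :: nat and V :: "'a set" and Pp :: "nat \<Rightarrow> 'a set" and F :: "'a set set"
  assumes t2: "t \<ge> 2" and k2: "k \<ge> 2" and finV: "finite V"
  and Fsub: "F \<subseteq> ksubsets V k"
  and partsV: "\<And>i. i < t \<Longrightarrow> Pp i \<subseteq> V"
  and partsk: "\<And>i. i < t \<Longrightarrow> card (Pp i) = k"
  and disj: "\<And>i j. i < t \<Longrightarrow> j < t \<Longrightarrow> i \<noteq> j \<Longrightarrow> Pp i \<inter> Pp j = {}"
  and cover: "(\<Union>i<t. Pp i) = V"
  and patt: "\<And>S T. S \<in> ksubsets V k \<Longrightarrow> T \<in> ksubsets V k \<Longrightarrow> (\<forall>i<t. card (S \<inter> Pp i) = card (T \<inter> Pp i)) \<Longrightarrow> (S \<in> F \<longleftrightarrow> T \<in> F)"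
begin

definition prof :: "'a set \<Rightarrow> (nat \<Rightarrow> nat)" where
  "prof R = (\<lambda>i. if i < t then card (R \<inter> Pp i) else 0)"

definition phi :: "(nat \<Rightarrow> nat) \<Rightarrow> real" where
  "phi v = (if \<exists>R\<in>F. prof R = v then 1 else 0)"

definition rel :: "('a \<times> 'a) \<Rightarrow> (nat \<times> nat) \<Rightarrow> bool" where
  "rel ab pq \<longleftrightarrow> fst pq < t \<and> snd pq < t \<and> fst pq \<noteq> snd pq \<and> fst ab \<in> Pp (fst pq) \<and> snd ab \<in> Pp (snd pq)"

lemma finP: "i < t \<Longrightarrow> finite (Pp i)"
  using partsV finV finite_subset by blast

lemma phi01: "phi v = 0 \<or> phi v = 1"
  by (simp add: phi_def)

lemma phi_ind: "R \<in> ksubsets V k \<Longrightarrow> (if R \<in> F then 1 else 0) = phi (prof R)"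
proof -
  assume R: "R \<in> ksubsets V k"
  show ?thesis
  proof (cases "R \<in> F")
    case True then show ?thesis by (auto simp: phi_def)
  next
    case False
    have "\<not> (\<exists>R'\<in>F. prof R' = prof R)"
    proof
      assume "\<exists>R'\<in>F. prof R' = prof R"
      then obtain R' where R': "R' \<in> F" "prof R' = prof R" by blast
      have "\<forall>i<t. card (R' \<inter> Pp i) = card (R \<inter> Pp i)"
        using R'(2) unfolding prof_def by (metis (full_types))
      then have "R' \<in> F \<longleftrightarrow> R \<in> F" using patt[of R' R] R'(1) Fsub R by blast
      then show False using R'(1) False by simp
    qed
    then show ?thesis using False by (simp add: phi_def)
  qed
qed

lemma spt_prof: "spt t (prof R)"
  by (simp add: spt_def prof_def)

lemma lev_prof: "S \<subseteq> V \<Longrightarrow> lev t (prof S) = card S"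
proof -
  assume S: "S \<subseteq> V"
  have "lev t (prof S) = (\<Sum>i<t. card (S \<inter> Pp i))" by (simp add: lev_def prof_def)
  also have "\<dots> = card (\<Union>i<t. S \<inter> Pp i)"
    by (rule card_UN_disjoint[symmetric]) (use finP disj in auto)
  also have "(\<Union>i<t. S \<inter> Pp i) = S" using cover S by auto
  finally show ?thesis .
qed

lemma card_V: "card V = t * k"
proof -
  have "card V = lev t (prof V)" using lev_prof[of V] by simp
  also have "\<dots> = (\<Sum>i<t. k)" unfolding lev_def prof_def using partsV partsk
    by (intro sum.cong) (auto simp: Int_absorb1)
  finally show ?thesis by simp
qed

lemma prof_insert:
  assumes "finite R" "a \<notin> R" "p < t" "a \<in> Pp p"
  shows "prof (insert a R) = inc (prof R) p"
proof
  fix i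
  show "prof (insert a R) i = inc (prof R) p i"
  proof (cases "i < t")
    case True
    show ?thesis
    proof (cases "i = p")
      case True
      then have "insert a R \<inter> Pp i = insert a (R \<inter> Pp i)" using assms by auto
      then show ?thesis using True assms by (simp add: prof_def inc_def)
    next
      case False
      then have "a \<notin> Pp i" using disj[of i p] assms \<open>i < t\<close> by auto
      then have "insert a R \<inter> Pp i = R \<inter> Pp i" by auto
      then show ?thesis using False by (simp add: prof_def inc_def)
    qed
  next
    case False
    then show ?thesis using assms by (auto simp: prof_def inc_def)
  qed
qed

end



context pat
begin

lemma Rs_sum:
  assumes "list_all2 rel prs P" "distinct (pflat prs)" "U \<inter> set (pflat prs) = {}" "finite U"
  shows "(\<Sum>R\<in>Rs U prs n. (-1)^card (R \<inter> set (map snd prs)) * f (prof R)) = (\<Sum>S\<in>Rs U [] n. Dl P f (prof S))"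
  using assms
proof (induction prs P arbitrary: f rule: list_all2_induct)
  case Nil
  then show ?case by simp
next
  case (Cons ab prs pq P)
  obtain a b where ab: "ab = (a,b)" by (cases ab)
  obtain p q where pq: "pq = (p,q)" by (cases pq)
  have r: "p < t" "q < t" "p \<noteq> q" "a \<in> Pp p" "b \<in> Pp q" using Cons.hyps(1) ab pq by (auto simp: rel_def)
  have d: "a \<noteq> b" "a \<notin> set (pflat prs)" "b \<notin> set (pflat prs)" "distinct (pflat prs)"
    using Cons.prems(1) ab by auto
  have u: "a \<notin> U" "b \<notin> U" "U \<inter> set (pflat prs) = {}" using Cons.prems(2) ab by auto
  define B where "B = set (map snd prs)"
  have Bsub: "B \<subseteq> set (pflat prs)" unfolding B_def using pflat_mem by fastforce
  have IH: "\<And>f. (\<Sum>R\<in>Rs U prs n. (-1)^card (R \<inter> B) * f (prof R)) = (\<Sum>S\<in>Rs U [] n. Dl P f (prof S))"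
    using Cons.IH d(4) u(3) Cons.prems(3) unfolding B_def by blast
  have fin: "finite (Rs U prs n)" using Cons.prems(3) by (rule Rs_finite)
  have mem: "a \<notin> R" "b \<notin> R" "finite R" if "R \<in> Rs U prs n" for R
  proof -
    have R: "R \<subseteq> U \<union> set (pflat prs)" using that by (auto simp: Rs_def)
    then show "a \<notin> R" "b \<notin> R" using u d by auto
    show "finite R" by (rule finite_subset[OF R]) (use Cons.prems(3) in simp)
  qed
  have sa: "card (insert a R \<inter> insert b B) = card (R \<inter> B)" if "R \<in> Rs U prs n" for R
  proof -
    have "insert a R \<inter> insert b B = R \<inter> B" using mem[OF that] d Bsub by auto
    then show ?thesis by simp
  qed
  have sb: "card (insert b R \<inter> insert b B) = Suc (card (R \<inter> B))" if "R \<in> Rs U prs n" for R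
  proof -
    have "insert b R \<inter> insert b B = insert b (R \<inter> B)" by auto
    moreover have "finite (R \<inter> B)" using mem(3)[OF that] by simp
    moreover have "b \<notin> R \<inter> B" using mem(2)[OF that] by simp
    ultimately show ?thesis by simp
  qed
  have RC: "Rs U ((a,b)#prs) n = insert a ` Rs U prs n \<union> insert b ` Rs U prs n"
    by (rule Rs_Cons) (use u d Cons.prems(3) in auto)
  have disjAB: "insert a ` Rs U prs n \<inter> insert b ` Rs U prs n = {}"
    using mem d by fastforce
  have inja: "inj_on (insert a) (Rs U prs n)"
    unfolding inj_on_def using mem by (metis insert_ident)
  have injb: "inj_on (insert b) (Rs U prs n)"
    unfolding inj_on_def using mem by (metis insert_ident)
  let ?h = "\<lambda>R. (-1)^card (R \<inter> insert b B) * f (prof R)"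
  have "(\<Sum>R\<in>Rs U (ab#prs) n. (-1)^card (R \<inter> set (map snd (ab#prs))) * f (prof R))
      = (\<Sum>R\<in>Rs U ((a,b)#prs) n. ?h R)" by (simp add: ab B_def)
  also have "\<dots> = (\<Sum>R\<in>insert a ` Rs U prs n. ?h R) + (\<Sum>R\<in>insert b ` Rs U prs n. ?h R)"
    unfolding RC by (rule sum.union_disjoint) (use fin disjAB in auto)
  also have "(\<Sum>R\<in>insert a ` Rs U prs n. ?h R) = (\<Sum>R\<in>Rs U prs n. ?h (insert a R))"
    by (rule sum.reindex[OF inja, unfolded comp_def])
  also have "(\<Sum>R\<in>insert b ` Rs U prs n. ?h R) = (\<Sum>R\<in>Rs U prs n. ?h (insert b R))"
    by (rule sum.reindex[OF injb, unfolded comp_def])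
  also have "(\<Sum>R\<in>Rs U prs n. ?h (insert a R)) + (\<Sum>R\<in>Rs U prs n. ?h (insert b R))
      = (\<Sum>R\<in>Rs U prs n. (-1)^card (R \<inter> B) * (\<lambda>v. f (inc v p) - f (inc v q)) (prof R))"
    unfolding sum.distrib[symmetric]
  proof (rule sum.cong[OF refl])
    fix R assume R: "R \<in> Rs U prs n"
    have "prof (insert a R) = inc (prof R) p" by (rule prof_insert) (use mem[OF R] r in auto)
    moreover have "prof (insert b R) = inc (prof R) q" by (rule prof_insert) (use mem[OF R] r in auto)
    ultimately show "?h (insert a R) + ?h (insert b R) = (-1)^card (R \<inter> B) * (\<lambda>v. f (inc v p) - f (inc v q)) (prof R)"
      using sa[OF R] sb[OF R] by (simp add: algebra_simps)
  qed
  also have "\<dots> = (\<Sum>S\<in>Rs U [] n. Dl P (\<lambda>v. f (inc v p) - f (inc v q)) (prof S))" by (rule IH)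
  also have "\<dots> = (\<Sum>S\<in>Rs U [] n. Dl (pq#P) f (prof S))"
    by (simp add: pq Dl_diff Dl_inc)
  finally show ?case .
qed

lemma card_touch:
  assumes "list_all2 rel prs P" "i < t"
  shows "card (Pp i \<inter> set (pflat prs)) \<le> length prs"
  using assms
proof (induction prs P rule: list_all2_induct)
  case Nil then show ?case by simp
next
  case (Cons ab prs pq P)
  obtain a b where ab: "ab = (a,b)" by (cases ab)
  obtain p q where pq: "pq = (p,q)" by (cases pq)
  have r: "p < t" "q < t" "p \<noteq> q" "a \<in> Pp p" "b \<in> Pp q" using Cons.hyps(1) ab pq by (auto simp: rel_def)
  have "\<not> (a \<in> Pp i \<and> b \<in> Pp i)"
  proof
    assume h: "a \<in> Pp i \<and> b \<in> Pp i"
    then have "i = p" using disj[of i p] r Cons.prems by auto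
    moreover have "i = q" using h disj[of i q] r Cons.prems by auto
    ultimately show False using r by simp
  qed
  then have c1: "card (Pp i \<inter> {a,b}) \<le> 1"
    by (cases "a \<in> Pp i"; cases "b \<in> Pp i") auto
  have "Pp i \<inter> set (pflat (ab#prs)) = (Pp i \<inter> {a,b}) \<union> (Pp i \<inter> set (pflat prs))" using ab by auto
  then have "card (Pp i \<inter> set (pflat (ab#prs))) \<le> card (Pp i \<inter> {a,b}) + card (Pp i \<inter> set (pflat prs))"
    by (simp add: card_Un_le)
  then show ?case using c1 Cons.IH Cons.prems by simp
qed

lemma construct:
  "valid t P \<Longrightarrow> length P \<le> k \<Longrightarrow> \<exists>prs. list_all2 rel prs P \<and> distinct (pflat prs) \<and> set (pflat prs) \<subseteq> V"
proof (induction P)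
  case Nil
  show ?case by (intro exI[of _ "[]"]) simp
next
  case (Cons pq P)
  obtain p q where pq: "pq = (p,q)" by (cases pq)
  have r: "p < t" "q < t" "p \<noteq> q" using Cons.prems pq by (auto simp: valid_def)
  have "valid t P" using Cons.prems by (auto simp: valid_def)
  then obtain prs where prs: "list_all2 rel prs P" "distinct (pflat prs)" "set (pflat prs) \<subseteq> V"
    using Cons by auto
  have len: "length prs = length P" using prs(1) by (rule list_all2_lengthD)
  have ex: "\<exists>a. a \<in> Pp i \<and> a \<notin> set (pflat prs)" if i: "i < t" for i
  proof (rule ccontr)
    assume "\<not> ?thesis"
    then have "Pp i \<inter> set (pflat prs) = Pp i" by auto
    then have "k \<le> length prs" using card_touch[OF prs(1) i] partsk[OF i] by simp
    then show False using Cons.prems(2) len by simp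
  qed
  obtain a where a: "a \<in> Pp p" "a \<notin> set (pflat prs)" using ex[OF r(1)] by blast
  obtain b where b: "b \<in> Pp q" "b \<notin> set (pflat prs)" using ex[OF r(2)] by blast
  have ab: "a \<noteq> b" using a b disj[OF r] by auto
  show ?case
  proof (intro exI[of _ "(a,b)#prs"] conjI)
    show "list_all2 rel ((a, b) # prs) (pq # P)" using prs(1) r a b pq by (simp add: rel_def)
    show "distinct (pflat ((a, b) # prs))" using prs(2) a b ab by simp
    show "set (pflat ((a, b) # prs)) \<subseteq> V" using prs(3) a b partsV r by auto
  qed
qed

end



context pat
begin

lemma bridge:
  assumes P: "valid t P" "length P = r" "r \<le> k" and W: "WF V k r F = 0"
  shows "\<exists>SS. finite SS \<and> SS \<noteq> {} \<and> (\<forall>S\<in>SS. S \<subseteq> V \<and> card S = k - r) \<and> (\<Sum>S\<in>SS. Dl P phi (prof S)) = 0"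
proof -
  obtain prs where prs: "list_all2 rel prs P" "distinct (pflat prs)" "set (pflat prs) \<subseteq> V"
    using construct P by auto
  have lp: "length prs = r" using list_all2_lengthD[OF prs(1)] P by simp
  define xs where "xs = pflat prs"
  define U where "U = V - set xs"
  have xs_seq: "xs \<in> seqs V r" using prs lp by (simp add: seqs_def xs_def length_pflat)
  have fseq: "finite (seqs V r)"
  proof (rule finite_subset)
    show "seqs V r \<subseteq> {xs. set xs \<subseteq> V \<and> length xs = 2 * r}" by (auto simp: seqs_def)
    show "finite {xs. set xs \<subseteq> V \<and> length xs = 2 * r}" by (rule finite_lists_length_eq[OF finV])
  qed
  define h where "h = (\<lambda>ys R. (-1) ^ card (R \<inter> bset r ys) * (if R \<in> F then 1 else 0 :: real))"
  define Hf where "Hf = (\<lambda>ys. (avg (Rsets V k r ys) (h ys))\<^sup>2)"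
  have "WF V k r F = sqrt (avg (seqs V r) Hf)"
    by (simp add: WF_def Wnorm_def Hf_def h_def)
  then have "avg (seqs V r) Hf = 0" using W by simp
  moreover have "card (seqs V r) \<noteq> 0" using xs_seq fseq by auto
  ultimately have "sum Hf (seqs V r) = 0" by (simp add: avg_def)
  moreover have "\<And>x. x \<in> seqs V r \<Longrightarrow> 0 \<le> Hf x" by (simp add: Hf_def)
  ultimately have "\<forall>x\<in>seqs V r. Hf x = 0" using sum_nonneg_eq_0_iff[OF fseq, of Hf] by blast
  then have "Hf xs = 0" using xs_seq by blast
  then have a0: "avg (Rsets V k r xs) (h xs) = 0" by (simp add: Hf_def)
  have fR: "finite (Rsets V k r xs)"
  proof (rule finite_subset)
    show "Rsets V k r xs \<subseteq> Pow V" by (auto simp: Rsets_def ksubsets_def)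
    show "finite (Pow V)" using finV by simp
  qed
  have s0: "(\<Sum>R\<in>Rsets V k r xs. h xs R) = 0"
  proof (cases "card (Rsets V k r xs) = 0")
    case True then have "Rsets V k r xs = {}" using fR by simp
    then show ?thesis by simp
  next
    case False then show ?thesis using a0 by (simp add: avg_def)
  qed
  have n1: "xs ! (2*i) = fst (prs!i)" "xs ! (2*i+1) = snd (prs!i)" if "i < r" for i
    using pflat_nth[of i prs] that lp by (auto simp: xs_def)
  have pe: "(\<forall>(a,b)\<in>set prs. card (R \<inter> {a,b}) = 1) \<longleftrightarrow> (\<forall>i<r. card (R \<inter> {xs ! (2*i), xs ! (2*i+1)}) = 1)" for R
  proof -
    have "(\<forall>(a,b)\<in>set prs. card (R \<inter> {a,b}) = 1) \<longleftrightarrow> (\<forall>i<length prs. card (R \<inter> {fst (prs!i), snd (prs!i)}) = 1)"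
      unfolding all_set_conv_all_nth by (simp add: case_prod_beta)
    also have "\<dots> \<longleftrightarrow> (\<forall>i<r. card (R \<inter> {xs ! (2*i), xs ! (2*i+1)}) = 1)"
      using n1 lp by auto
    finally show ?thesis .
  qed
  have UV: "U \<union> set (pflat prs) = V" using prs(3) by (auto simp: U_def xs_def)
  have RsEq: "Rsets V k r xs = Rs U prs (k - r)"
    unfolding Rsets_def Rs_def ksubsets_def UV using pe lp P(3) by auto
  have bEq: "bset r xs = set (map snd prs)"
  proof (intro equalityI subsetI)
    fix x assume "x \<in> bset r xs"
    then obtain i where i: "i < r" "x = xs ! (2*i+1)" by (auto simp: bset_def)
    then have "x = map snd prs ! i" "i < length (map snd prs)" using n1 lp by auto
    then show "x \<in> set (map snd prs)" by (metis nth_mem)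
  next
    fix x assume "x \<in> set (map snd prs)"
    then obtain i where i: "i < length (map snd prs)" "map snd prs ! i = x" by (auto simp: in_set_conv_nth)
    then have "i < r" "x = xs ! (2*i+1)" using n1 lp by auto
    then show "x \<in> bset r xs" by (auto simp: bset_def)
  qed
  have "(\<Sum>R\<in>Rs U prs (k - r). (-1)^card (R \<inter> set (map snd prs)) * phi (prof R)) = 0"
  proof -
    have "(\<Sum>R\<in>Rs U prs (k - r). (-1)^card (R \<inter> set (map snd prs)) * phi (prof R))
        = (\<Sum>R\<in>Rsets V k r xs. h xs R)"
      unfolding RsEq[symmetric]
    proof (rule sum.cong[OF refl])
      fix R assume "R \<in> Rsets V k r xs"
      then have "R \<in> ksubsets V k" by (simp add: Rsets_def)
      then show "(-1)^card (R \<inter> set (map snd prs)) * phi (prof R) = h xs R"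
        using phi_ind by (simp add: h_def bEq)
    qed
    then show ?thesis using s0 by simp
  qed
  moreover have fU: "finite U" using finV by (simp add: U_def)
  moreover have "U \<inter> set (pflat prs) = {}" by (auto simp: U_def xs_def)
  ultimately have S0: "(\<Sum>S\<in>Rs U [] (k - r). Dl P phi (prof S)) = 0"
    using Rs_sum[OF prs(1) prs(2)] by metis
  have SSeq: "Rs U [] (k - r) = {S. S \<subseteq> U \<and> card S = k - r}" by (simp add: Rs_def)
  have cU: "card U = t * k - 2 * r"
  proof -
    have "card U = card V - card (set xs)" unfolding U_def
      by (rule card_Diff_subset) (use prs(3) xs_def in auto)
    moreover have "card (set xs) = 2 * r" using prs(2) lp by (simp add: xs_def distinct_card length_pflat)
    ultimately show ?thesis by (simp add: card_V)
  qed
  have tk: "2 * k \<le> t * k" using t2 by (rule mult_le_mono1)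
  have "k - r \<le> card U" using cU tk P(3) by linarith
  then obtain S where "S \<subseteq> U" "card S = k - r" by (rule obtain_subset_with_card_n)
  then have ne: "Rs U [] (k - r) \<noteq> {}" using SSeq by auto
  show ?thesis
  proof (intro exI[of _ "Rs U [] (k - r)"] conjI)
    show "finite (Rs U [] (k - r))" using fU by (rule Rs_finite)
    show "Rs U [] (k - r) \<noteq> {}" by (rule ne)
    show "\<forall>S\<in>Rs U [] (k - r). S \<subseteq> V \<and> card S = k - r" using SSeq by (auto simp: U_def)
    show "(\<Sum>S\<in>Rs U [] (k - r). Dl P phi (prof S)) = 0" by (rule S0)
  qed
qed

lemma Hstep:
  assumes j: "j \<le> k" and W: "WF V k (k - j) F = 0"
    and IH: "\<And>P v. 0 < j \<Longrightarrow> valid t P \<Longrightarrow> length P = k - j + 1 \<Longrightarrow> spt t v \<Longrightarrow> lev t v = j - 1 \<Longrightarrow> Dl P phi v = 0"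
    and P: "valid t P" "length P = k - j" and v: "spt t v" "lev t v = j"
  shows "Dl P phi v = 0"
proof -
  define c0 :: "nat \<Rightarrow> nat" where "c0 = (\<lambda>_. 0)(0 := j)"
  have const: "Dl P phi x = Dl P phi c0" if "spt t x" "lev t x = j" for x
    unfolding c0_def
  proof (rule const_level[where t=t and G="Dl P phi" and n=j, OF _ _ that])
    show "1 \<le> t" using t2 by simp
    fix y u w assume y: "spt t y" "Suc (lev t y) = j" "u < t" "w < t" "u \<noteq> w"
    have "Dl ((u,w)#P) phi y = 0"
      by (rule IH) (use y P in \<open>auto simp: valid_def\<close>)
    then show "Dl P phi (inc y u) = Dl P phi (inc y w)" by simp
  qed
  obtain SS where SS: "finite SS" "SS \<noteq> {}" "\<forall>S\<in>SS. S \<subseteq> V \<and> card S = k - (k - j)"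
      "(\<Sum>S\<in>SS. Dl P phi (prof S)) = 0"
    using bridge[OF P(1) P(2) _ W] by auto
  have "\<forall>S\<in>SS. Dl P phi (prof S) = Dl P phi c0"
    using const spt_prof lev_prof SS(3) j by auto
  then have "(\<Sum>S\<in>SS. Dl P phi (prof S)) = real (card SS) * Dl P phi c0" by simp
  then have "Dl P phi c0 = 0" using SS by auto
  then show ?thesis using const v by simp
qed

lemma Hall:
  assumes W: "\<forall>r\<in>{k - gfun k..k}. WF V k r F = 0"
  shows "k - gfun k \<le> r \<Longrightarrow> r \<le> k \<Longrightarrow> valid t P \<Longrightarrow> length P = r \<Longrightarrow> spt t v \<Longrightarrow> lev t v = k - r \<Longrightarrow> Dl P phi v = 0"
proof -
  have main: "\<forall>P v. valid t P \<longrightarrow> length P = k - j \<longrightarrow> spt t v \<longrightarrow> lev t v = j \<longrightarrow> Dl P phi v = 0"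
    if "j \<le> k" "j \<le> gfun k" for j
    using that
  proof (induction j)
    case 0
    show ?case
    proof (intro allI impI)
      fix P v assume a: "valid t P" "length P = k - 0" "spt t v" "lev t v = 0"
      show "Dl P phi v = 0"
      proof (rule Hstep[of 0])
        show "WF V k (k - 0) F = 0" using W by auto
      qed (use a in auto)
    qed
  next
    case (Suc j)
    show ?case
    proof (intro allI impI)
      fix P v assume a: "valid t P" "length P = k - Suc j" "spt t v" "lev t v = Suc j"
      show "Dl P phi v = 0"
      proof (rule Hstep[of "Suc j"])
        show "Suc j \<le> k" by (rule Suc.prems(1))
        show "WF V k (k - Suc j) F = 0" using W Suc.prems by auto
        show "\<And>P v. 0 < Suc j \<Longrightarrow> valid t P \<Longrightarrow> length P = k - Suc j + 1 \<Longrightarrow> spt t v \<Longrightarrow> lev t v = Suc j - 1 \<Longrightarrow> Dl P phi v = 0"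
        proof -
          fix P v assume b: "0 < Suc j" "valid t P" "length P = k - Suc j + 1" "spt t v" "lev t v = Suc j - 1"
          have "length P = k - j" using b(3) Suc.prems by simp
          then show "Dl P phi v = 0" using Suc.IH Suc.prems b by auto
        qed
      qed (use a in auto)
    qed
  qed
  assume r: "k - gfun k \<le> r" "r \<le> k" and P: "valid t P" "length P = r" and v: "spt t v" "lev t v = k - r"
  have "k - r \<le> k" "k - r \<le> gfun k" using r by auto
  from main[OF this] P v r show "Dl P phi v = 0" by auto
qed

lemma homog:
  assumes W: "\<forall>r\<in>{k - gfun k..k}. WF V k r F = 0"
  shows "homogeneous V k F"
proof -
  interpret c: comb t k "gfun k" phi
  proof
    show "2 \<le> t" by (rule t2)
    show "g_ok k (gfun k)" by (rule g_ok_gfun)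
    show "\<And>v. phi v = 0 \<or> phi v = 1" by (rule phi01)
    show "\<And>r P v. k - gfun k \<le> r \<Longrightarrow> r \<le> k \<Longrightarrow> valid t P \<Longrightarrow> length P = r \<Longrightarrow> spt t v \<Longrightarrow> lev t v = k - r \<Longrightarrow> Dl P phi v = 0"
      by (rule Hall[OF W])
  qed
  define c where "c = phi ((\<lambda>_. 0)(0 := k))"
  have pc: "phi (prof R) = c" if "R \<in> ksubsets V k" for R
  proof -
    have "lev t (prof R) = k" using lev_prof that by (auto simp: ksubsets_def)
    then show ?thesis using c.phi_const[OF spt_prof] by (simp add: c_def)
  qed
  show ?thesis
  proof (cases "c = 1")
    case True
    have "ksubsets V k \<subseteq> F"
    proof
      fix R assume R: "R \<in> ksubsets V k"
      then have "(if R \<in> F then 1 else 0) = (1::real)" using phi_ind[OF R] pc[OF R] True by simp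
      then show "R \<in> F" by (auto split: if_splits)
    qed
    then show ?thesis using Fsub by (auto simp: homogeneous_def)
  next
    case False
    then have c0: "c = 0" using phi01 unfolding c_def by metis
    have "F = {}"
    proof (rule ccontr)
      assume "F \<noteq> {}" then obtain R where R: "R \<in> F" by blast
      then have R': "R \<in> ksubsets V k" using Fsub by blast
      then have "(if R \<in> F then 1 else 0) = (0::real)" using phi_ind[OF R'] pc[OF R'] c0 by simp
      then show False using R by simp
    qed
    then show ?thesis by (simp add: homogeneous_def)
  qed
qed

end

theorem lemma4p3:
  fixes k t :: nat and V :: "'a set" and F :: "'a set set"
  assumes "k \<ge> 2" and "t \<ge> 2"
    and "is_pattern k t k V F"
    and "\<forall>r\<in>{k - gfun k..k}. WF V k r F = 0"
  shows "homogeneous V k F"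
proof -
  obtain Pp :: "nat \<Rightarrow> 'a set" where
    fin: "finite V" and Fs: "F \<subseteq> ksubsets V k" and
    P1: "\<forall>i<t. Pp i \<subseteq> V \<and> card (Pp i) = k" and
    P2: "\<forall>i<t. \<forall>j<t. i \<noteq> j \<longrightarrow> Pp i \<inter> Pp j = {}" and
    P3: "(\<Union>i<t. Pp i) = V" and
    P4: "\<forall>S\<in>ksubsets V k. \<forall>T\<in>ksubsets V k.
            (\<forall>i<t. card (S \<inter> Pp i) = card (T \<inter> Pp i)) \<longrightarrow> (S \<in> F \<longleftrightarrow> T \<in> F)"
    using assms(3) unfolding is_pattern_def by blast
  interpret pat t k V Pp F
  proof
    show "2 \<le> t" by fact
    show "2 \<le> k" by fact
    show "finite V" by fact
    show "F \<subseteq> ksubsets V k" by fact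
    show "\<And>i. i < t \<Longrightarrow> Pp i \<subseteq> V" using P1 by blast
    show "\<And>i. i < t \<Longrightarrow> card (Pp i) = k" using P1 by blast
    show "\<And>i j. i < t \<Longrightarrow> j < t \<Longrightarrow> i \<noteq> j \<Longrightarrow> Pp i \<inter> Pp j = {}" using P2 by blast
    show "(\<Union>i<t. Pp i) = V" by fact
    show "\<And>S T. S \<in> ksubsets V k \<Longrightarrow> T \<in> ksubsets V k \<Longrightarrow> (\<forall>i<t. card (S \<inter> Pp i) = card (T \<inter> Pp i)) \<Longrightarrow> (S \<in> F \<longleftrightarrow> T \<in> F)"
      using P4 by blast
  qed
  show ?thesis by (rule homog[OF assms(4)])
qed



end
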